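(* Let $S$ be a ubiquitously dense subset of $[0,\infty)$ with $0\in S$, and put $\kappa=\operatorname{card}(S)$. Let $X$ be a discrete topological space with $\operatorname{card}(X)\le\kappa$, let $d\in\mathrm{Met}(X)$ and $\epsilon\in(0,\infty)$. Then there exists $e\in\mathrm{Met}(X;S)$ such that: (1) $\mathcal{D}_X(d,e)\le\epsilon$; (2) $e$ is uniformly discrete; (3) $e(x,y)<e(x,z)+e(z,y)$ for all pairwise distinct $x,y,z\in X$; (4) $e$ is strongly rigid.
   Context: A subset $S$ of a topological space $Y$ is ubiquitously dense if $\operatorname{card}(U\cap S)=\operatorname{card}(S)$ for every non-empty open $U\subseteq Y$. For a topological space $X$ and $S\subseteq[0,\infty)$ with $0\in S$, $\mathrm{Met}(X;S)$ is the set of metrics on $X$ with values in $S$ generating the topology of $X$, and $\mathrm{Met}(X)=\mathrm{Met}(X;[0,\infty))$; $\mathcal{D}_X(d,e)=\sup_{x,y\in X}|d(x,y)-e(x,y)|$. A metric $e$ is uniformly discrete if there is $c>0$ with $c<e(x,y)$ for all distinct $x,y$. A metric $e$ is strongly rigid if $e(x,y)=e(u,v)\neq0$ implies $\{x,y\}=\{u,v\}$. *)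

theory Defs
  imports "HOL-Analysis.Analysis" "HOL-Library.Equipollence"
begin

definition ubiquitously_dense :: "'a topology \<Rightarrow> 'a set \<Rightarrow> bool" where
  "ubiquitously_dense Y S \<longleftrightarrow> S \<subseteq> topspace Y \<and>
     (\<forall>U. openin Y U \<and> U \<noteq> {} \<longrightarrow> U \<inter> S \<approx> S)"

definition Met :: "'a topology \<Rightarrow> real set \<Rightarrow> ('a \<Rightarrow> 'a \<Rightarrow> real) set" where
  "Met X S = {d.
     (\<forall>x\<in>topspace X. \<forall>y\<in>topspace X.
        d x y \<in> S \<and> 0 \<le> d x y \<and> (d x y = 0 \<longleftrightarrow> x = y) \<and> d x y = d y x) \<and>
     (\<forall>x\<in>topspace X. \<forall>y\<in>topspace X. \<forall>z\<in>topspace X. d x y \<le> d x z + d z y) \<and>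
     (\<forall>U. openin X U \<longleftrightarrow>
        U \<subseteq> topspace X \<and>
        (\<forall>x\<in>U. \<exists>r>0. \<forall>y\<in>topspace X. d x y < r \<longrightarrow> y \<in> U))}"

definition metric_dist_sup :: "'a topology \<Rightarrow> ('a \<Rightarrow> 'a \<Rightarrow> real) \<Rightarrow> ('a \<Rightarrow> 'a \<Rightarrow> real) \<Rightarrow> ereal" where
  "metric_dist_sup X d e =
     (SUP p\<in>topspace X \<times> topspace X. ereal \<bar>d (fst p) (snd p) - e (fst p) (snd p)\<bar>)"

definition uniformly_discrete :: "'a set \<Rightarrow> ('a \<Rightarrow> 'a \<Rightarrow> real) \<Rightarrow> bool" where
  "uniformly_discrete A e \<longleftrightarrow> (\<exists>c>0. \<forall>x\<in>A. \<forall>y\<in>A. x \<noteq> y \<longrightarrow> c < e x y)"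

definition strongly_rigid :: "'a set \<Rightarrow> ('a \<Rightarrow> 'a \<Rightarrow> real) \<Rightarrow> bool" where
  "strongly_rigid A e \<longleftrightarrow> (\<forall>x\<in>A. \<forall>y\<in>A. \<forall>u\<in>A. \<forall>v\<in>A.
      e x y = e u v \<and> e x y \<noteq> 0 \<longrightarrow> {x, y} = {u, v})"

end

theory Submission
  imports Defs
begin

lemma sq: "infinite (S::'b set) \<Longrightarrow> S \<times> S \<approx> S"
  using card_of_Times_same_infinite eqpoll_iff_card_of_ordIso by blast
lemma dens:
  fixes S :: "real set"
  assumes "ubiquitously_dense (top_of_set {0..}) S" "0 \<le> a" "a < b"
  shows "{a<..<b} \<inter> S \<approx> S"
proof -
  have "openin (top_of_set {0..}) ({0..} \<inter> {a<..<b})" by (rule openin_open_Int) simp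
  moreover have "{0..} \<inter> {a<..<b} = {a<..<b}" using assms by auto
  ultimately show ?thesis using assms unfolding ubiquitously_dense_def by auto
qed
lemma inf:
  fixes S :: "real set" and b :: real
  assumes "ubiquitously_dense (top_of_set {0..}) S" "0 \<in> S" "0 < b"
  shows "infinite S"
proof
  assume f: "finite S"
  have e: "{0<..<b::real} \<inter> S \<approx> S" using dens[OF assms(1)] assms by auto
  have "{0<..<b::real} \<inter> S \<subset> S" using assms by auto
  then have "card ({0<..<b::real} \<inter> S) < card S" using f by (meson psubset_card_mono)
  moreover have "card ({0<..<b::real} \<inter> S) = card S" using e f eqpoll_iff_card
    by (metis finite_Int)
  ultimately show False by simp
qed

lemma Jdisj:
  fixes w v :: real assumes "0 < w" "real k * w < v" "v < (real k + 1) * w"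
    "real l * w < v" "v < (real l + 1) * w"
  shows "k = l"
proof -
  have "real k * w < (real l + 1) * w" "real l * w < (real k + 1) * w" using assms by linarith+
  moreover have "real k < real l + 1"
  proof (rule ccontr)
    assume "\<not> real k < real l + 1"
    then have "(real l + 1) * w \<le> real k * w" using assms(1) by (intro mult_right_mono) auto
    then show False using assms by linarith
  qed
  moreover have "real l < real k + 1"
  proof (rule ccontr)
    assume "\<not> real l < real k + 1"
    then have "(real k + 1) * w \<le> real l * w" using assms(1) by (intro mult_right_mono) auto
    then show False using assms by linarith
  qed
  ultimately show ?thesis by linarith
qed

theorem theorem2p5:
  fixes S :: "real set" and X :: "'a topology" and d :: "'a \<Rightarrow> 'a \<Rightarrow> real" and \<epsilon> :: real
  assumes "S \<subseteq> {0..}" and "0 \<in> S"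
    and "ubiquitously_dense (top_of_set {0..}) S"
    and "X = discrete_topology (topspace X)"
    and "topspace X \<lesssim> S"
    and "d \<in> Met X {0..}"
    and "0 < \<epsilon>"
  shows "\<exists>e \<in> Met X S.
           metric_dist_sup X d e \<le> ereal \<epsilon> \<and>
           uniformly_discrete (topspace X) e \<and>
           (\<forall>x\<in>topspace X. \<forall>y\<in>topspace X. \<forall>z\<in>topspace X.
              x \<noteq> y \<and> y \<noteq> z \<and> x \<noteq> z \<longrightarrow> e x y < e x z + e z y) \<and>
           strongly_rigid (topspace X) e"
proof -
  define T where "T = topspace X"
  have dM: "\<And>x y. x \<in> T \<Longrightarrow> y \<in> T \<Longrightarrow> 0 \<le> d x y \<and> (d x y = 0 \<longleftrightarrow> x = y) \<and> d x y = d y x"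
    and dtri: "\<And>x y z. x \<in> T \<Longrightarrow> y \<in> T \<Longrightarrow> z \<in> T \<Longrightarrow> d x y \<le> d x z + d z y"
    using assms(6) unfolding Met_def T_def by auto
  obtain g where g: "inj_on g T" "g ` T \<subseteq> S" using assms(5) unfolding lepoll_def T_def by blast
  define \<delta> where "\<delta> = \<epsilon> / 2"
  define w where "w = \<delta> / 3"
  have wpos: "0 < w" and dpos: "0 < \<delta>" using assms(7) by (auto simp: w_def \<delta>_def)
  define J where "J k = {real k * w <..< (real k + 1) * w}" for k :: nat
  have infS: "infinite S" using inf[OF assms(3) assms(2) wpos] .
  have "\<forall>k. \<exists>hk. inj_on hk (S \<times> S) \<and> hk ` (S \<times> S) \<subseteq> J k \<inter> S"
  proof
    fix k
    have "J k \<inter> S \<approx> S" unfolding J_def using dens[OF assms(3)] wpos by auto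
    then have "S \<times> S \<approx> J k \<inter> S" using sq[OF infS] by (meson eqpoll_sym eqpoll_trans)
    then show "\<exists>hk. inj_on hk (S \<times> S) \<and> hk ` (S \<times> S) \<subseteq> J k \<inter> S"
      unfolding eqpoll_def bij_betw_def by blast
  qed
  then obtain h where h: "\<And>k. inj_on (h k) (S \<times> S)" "\<And>k. h k ` (S \<times> S) \<subseteq> J k \<inter> S"
    by metis
  define kf where "kf x y = nat \<lceil>(d x y + \<delta>) / w\<rceil>" for x y
  define m where "m x y = (min (g x) (g y), max (g x) (g y))" for x y
  define e where "e x y = (if x = y then 0 else h (kf x y) (m x y))" for x y
  have mS: "m x y \<in> S \<times> S" if "x \<in> T" "y \<in> T" for x y
    using g that unfolding m_def min_def max_def by auto
  have eJ: "e x y \<in> J (kf x y) \<inter> S" if "x \<in> T" "y \<in> T" "x \<noteq> y" for x y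
  proof -
    have "h (kf x y) (m x y) \<in> h (kf x y) ` (S \<times> S)" using mS[OF that(1,2)] by (rule imageI)
    then show ?thesis using h(2)[of "kf x y"] that(3) unfolding e_def by auto
  qed
  have ebnd: "d x y + \<delta> < e x y \<and> e x y < d x y + 2 * \<delta>" if "x \<in> T" "y \<in> T" "x \<noteq> y" for x y
  proof -
    have d0: "0 \<le> d x y" using dM that by auto
    have r: "real (kf x y) = of_int \<lceil>(d x y + \<delta>) / w\<rceil>"
      unfolding kf_def using d0 dpos wpos by (simp add: divide_nonneg_pos)
    have r1: "(d x y + \<delta>) / w \<le> real (kf x y)" "real (kf x y) < (d x y + \<delta>) / w + 1"
      unfolding r by linarith+
    have a: "d x y + \<delta> \<le> real (kf x y) * w" using r1(1) wpos by (simp add: pos_divide_le_eq)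
    have b: "(real (kf x y) + 1) * w < d x y + \<delta> + 2 * w"
    proof -
      have "real (kf x y) * w < ((d x y + \<delta>) / w + 1) * w" using r1(2) wpos by simp
      also have "\<dots> = d x y + \<delta> + w" using wpos by (simp add: field_simps)
      finally show ?thesis by (simp add: algebra_simps)
    qed
    have "e x y \<in> J (kf x y)" using eJ[OF that] by auto
    then show ?thesis using a b unfolding J_def w_def by auto
  qed
  have esym: "e x y = e y x" if "x \<in> T" "y \<in> T" for x y
    using dM[OF that] unfolding e_def kf_def m_def by (auto simp: min.commute max.commute)
  have eS: "e x y \<in> S" if "x \<in> T" "y \<in> T" for x y
    using eJ[OF that] assms(2) unfolding e_def by (cases "x = y") auto
  have epos: "e x y > \<delta>" if "x \<in> T" "y \<in> T" "x \<noteq> y" for x y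
    using ebnd[OF that] dM[OF that(1,2)] by linarith
  have etri: "e x y < e x z + e z y" if "x \<in> T" "y \<in> T" "z \<in> T" "x \<noteq> z" "z \<noteq> y" for x y z
  proof (cases "x = y")
    case True
    have "\<delta> < e x z" "\<delta> < e z y" using epos that by auto
    then show ?thesis using True dpos unfolding e_def by simp
  next
    case False
    have "e x y < d x y + 2 * \<delta>" using ebnd[OF that(1,2) False] by auto
    also have "\<dots> \<le> d x z + d z y + 2 * \<delta>" using dtri[OF that(1-3)] by simp
    also have "\<dots> < e x z + e z y" using ebnd[OF that(1,3,4)] ebnd[OF that(3,2,5)] by linarith
    finally show ?thesis .
  qed
  have etri2: "e x y \<le> e x z + e z y" if "x \<in> T" "y \<in> T" "z \<in> T" for x y z
  proof (cases "x \<noteq> z \<and> z \<noteq> y")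
    case True then show ?thesis using etri that by fastforce
  next
    case False then show ?thesis unfolding e_def by auto
  qed
  have eMet: "e \<in> Met X S"
    unfolding Met_def
  proof (intro CollectI conjI ballI allI)
    fix x y assume xy: "x \<in> topspace X" "y \<in> topspace X"
    then have xy': "x \<in> T" "y \<in> T" by (auto simp: T_def)
    show "e x y \<in> S" using eS xy' .
    have e0: "e x x = 0" unfolding e_def by simp
    show "0 \<le> e x y" using epos[OF xy'] dpos e0 by (cases "x = y") auto
    show "(e x y = 0) = (x = y)" using epos[OF xy'] dpos e0 by (cases "x = y") auto
    show "e x y = e y x" using esym xy' .
  next
    fix x y z assume "x \<in> topspace X" "y \<in> topspace X" "z \<in> topspace X"
    then show "e x y \<le> e x z + e z y" using etri2 by (auto simp: T_def)
  next
    fix U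
    show "openin X U = (U \<subseteq> topspace X \<and> (\<forall>x\<in>U. \<exists>r>0. \<forall>y\<in>topspace X. e x y < r \<longrightarrow> y \<in> U))"
    proof
      assume "openin X U"
      then have U: "U \<subseteq> T" using assms(4) by (metis T_def openin_discrete_topology)
      show "U \<subseteq> topspace X \<and> (\<forall>x\<in>U. \<exists>r>0. \<forall>y\<in>topspace X. e x y < r \<longrightarrow> y \<in> U)"
      proof (intro conjI ballI)
        show "U \<subseteq> topspace X" using U T_def by simp
        fix x assume x: "x \<in> U"
        show "\<exists>r>0. \<forall>y\<in>topspace X. e x y < r \<longrightarrow> y \<in> U"
        proof (intro exI[of _ \<delta>] conjI ballI impI)
          show "0 < \<delta>" by (rule dpos)
          fix y assume "y \<in> topspace X" "e x y < \<delta>"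
          then show "y \<in> U" using epos[of x y] x U by (auto simp: T_def)
        qed
      qed
    next
      assume "U \<subseteq> topspace X \<and> (\<forall>x\<in>U. \<exists>r>0. \<forall>y\<in>topspace X. e x y < r \<longrightarrow> y \<in> U)"
      then show "openin X U" using assms(4) by (metis openin_discrete_topology)
    qed
  qed
  have dist: "metric_dist_sup X d e \<le> ereal \<epsilon>"
    unfolding metric_dist_sup_def
  proof (rule SUP_least)
    fix p assume p: "p \<in> topspace X \<times> topspace X"
    obtain x y where pxy: "p = (x, y)" by fastforce
    have xy: "x \<in> T" "y \<in> T" using p pxy T_def by auto
    have "\<bar>d x y - e x y\<bar> \<le> \<epsilon>"
    proof (cases "x = y")
      case True then show ?thesis using dM[OF xy] assms(7) unfolding e_def by auto
    next
      case False then show ?thesis using ebnd[OF xy False] unfolding \<delta>_def by auto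
    qed
    then show "ereal \<bar>d (fst p) (snd p) - e (fst p) (snd p)\<bar> \<le> ereal \<epsilon>" using pxy by simp
  qed
  have ud: "uniformly_discrete (topspace X) e"
    unfolding uniformly_discrete_def using dpos epos T_def by blast
  have sr: "strongly_rigid (topspace X) e"
    unfolding strongly_rigid_def
  proof (intro ballI impI)
    fix x y u v assume xs: "x \<in> topspace X" "y \<in> topspace X" "u \<in> topspace X" "v \<in> topspace X"
      and eq: "e x y = e u v \<and> e x y \<noteq> 0"
    then have T4: "x \<in> T" "y \<in> T" "u \<in> T" "v \<in> T" by (auto simp: T_def)
    have xy: "x \<noteq> y" using eq unfolding e_def by auto
    have uv: "u \<noteq> v" using eq unfolding e_def by auto
    have j1: "e x y \<in> J (kf x y)" using eJ[OF T4(1,2) xy] by auto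
    have j2: "e x y \<in> J (kf u v)" using eJ[OF T4(3,4) uv] eq by auto
    have kk: "kf x y = kf u v" using Jdisj[OF wpos] j1 j2 unfolding J_def by auto
    have "h (kf x y) (m x y) = h (kf x y) (m u v)" using eq xy uv kk unfolding e_def by auto
    then have mm: "m x y = m u v" using h(1) mS T4 by (meson inj_onD)
    have gi: "\<And>a b. a \<in> T \<Longrightarrow> b \<in> T \<Longrightarrow> g a = g b \<Longrightarrow> a = b" using g(1) by (meson inj_onD)
    show "{x, y} = {u, v}"
    proof -
      have "{g x, g y} = {g u, g v}" using mm unfolding m_def
        by (auto simp: min_def max_def split: if_splits)
      then have "(g x = g u \<and> g y = g v) \<or> (g x = g v \<and> g y = g u)" by (auto simp: doubleton_eq_iff)
      then show ?thesis using gi T4 by blast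
    qed
  qed
  show ?thesis using eMet dist ud sr etri T_def by blast
qed

end
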